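(* Fix $c > 0$ and $p \in (0,1)$. For $x^{\text{obs}} > c$ let $\theta_{\text{2-sided}}(p)$ denote the unique $\theta \in \mathbb{R}$ solving $F_{\text{2-sided}}(x^{\text{obs}},\theta,c) = p$. Then as $x^{\text{obs}} \downarrow c$, $\theta_{\text{2-sided}}(p)$ converges to a finite limit, namely the unique $\theta \in \mathbb{R}$ solving $$p = \frac{\Phi(-c-\theta)}{\Phi(-c-\theta) + \Phi(-c+\theta)}.$$ In particular, for $p = 0.5$ the limit is $0$, i.e. the conditionally median-unbiased estimator $\theta_{\text{2-sided}}(0.5) \to 0$ as $x^{\text{obs}} \downarrow c$.
   Context: Let $\Phi$ denote the standard normal distribution function and let $c>0$. For $X \sim N(\theta,1)$, the distribution function of $X$ conditional on $|X| \ge c$ is $$F_{\text{2-sided}}(a,\theta,c) = \Pr(X \le a \mid |X| \ge c) = \frac{\min\big(\Phi(a-\theta), \Phi(-c-\theta)\big) + \mathbf{1}_{a > c}\big(\Phi(a-\theta) - \Phi(c-\theta)\big)}{\Phi(-c-\theta) + \Phi(-c+\theta)},$$ where $\mathbf{1}_{a>c}$ equals $1$ if $a > c$ and $0$ otherwise. For $x^{\text{obs}} > c$ the map $\theta \mapsto F_{\text{2-sided}}(x^{\text{obs}},\theta,c)$ is assumed (as in the paper) to be a continuous strictly decreasing bijection from $\mathbb{R}$ onto $(0,1)$, so that $\theta_{\text{2-sided}}(p)$ is well defined. *)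

theory Defs
  imports "HOL-Probability.Probability"
begin

definition Phi :: "real \<Rightarrow> real" where
  "Phi x = (LBINT t:{..x}. std_normal_density t)"

text \<open>Distribution function of X ~ N(theta,1) conditional on |X| >= c.\<close>
definition F2sided :: "real \<Rightarrow> real \<Rightarrow> real \<Rightarrow> real" where
  "F2sided a \<theta> c =
     (min (Phi (a - \<theta>)) (Phi (-c - \<theta>))
        + (if a > c then Phi (a - \<theta>) - Phi (c - \<theta>) else 0))
     / (Phi (-c - \<theta>) + Phi (-c + \<theta>))"

definition theta2sided :: "real \<Rightarrow> real \<Rightarrow> real \<Rightarrow> real" where
  "theta2sided xobs c p = (THE \<theta>. F2sided xobs \<theta> c = p)"

end

theory Submission imports Defs "HOL-Real_Asymp.Real_Asymp" begin

definition NM :: "real measure" where "NM = density lborel std_normal_density"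

lemma NM_prob: "real_distribution NM"
  unfolding real_distribution_def real_distribution_axioms_def NM_def
  using prob_space_normal_density by auto

lemma NM_measure: assumes [measurable]: "A \<in> sets borel"
  shows "measure NM A = (LBINT t:A. std_normal_density t)"
proof -
  have "emeasure NM A = (\<integral>\<^sup>+x. ennreal (std_normal_density x) * indicator A x \<partial>lborel)"
    unfolding NM_def by (rule emeasure_density) auto
  also have "\<dots> = ennreal (LBINT t:A. std_normal_density t)"
    by (rule nn_set_integral_eq_set_integral) auto
  finally show ?thesis unfolding measure_def
    unfolding set_lebesgue_integral_def by (simp add: integral_nonneg)
qed

lemma Phi_cdf: "Phi = cdf NM"
  by (rule ext) (simp add: Phi_def cdf_def NM_measure)

interpretation NMr: real_distribution NM by (rule NM_prob)

lemma Phi_bot: "(Phi \<longlongrightarrow> 0) at_bot"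
  unfolding Phi_cdf by (rule NMr.cdf_lim_at_bot)

lemma Phi_top: "(Phi \<longlongrightarrow> 1) at_top"
  unfolding Phi_cdf by (rule NMr.cdf_lim_at_top_prob)

lemma Phi_cont: "isCont Phi x"
proof -
  have "measure NM {x} = (LBINT t:{x}. std_normal_density t)" by (rule NM_measure) auto
  also have "\<dots> = 0" unfolding set_lebesgue_integral_def
    by (rule integral_eq_zero_AE) (use AE_lborel_singleton[of x] in \<open>auto elim!: eventually_mono\<close>)
  finally show ?thesis unfolding Phi_cdf by (simp add: NMr.isCont_cdf)
qed

lemma Phi_strict: assumes "x < y" shows "Phi x < Phi y"
proof -
  have eq: "Phi y - Phi x = measure NM {x<..y}" unfolding Phi_cdf using assms by (rule NMr.cdf_diff_eq)
  have "emeasure NM {x<..y} \<noteq> 0"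
  proof
    assume "emeasure NM {x<..y} = 0"
    then have "(\<integral>\<^sup>+t. ennreal (std_normal_density t) * indicator {x<..y} t \<partial>lborel) = 0"
      unfolding NM_def by (subst (asm) emeasure_density) auto
    then have "AE t in lborel. ennreal (std_normal_density t) * indicator {x<..y} t = 0"
      by (subst (asm) nn_integral_0_iff_AE) auto
    then have "AE t in lborel. t \<notin> {x<..y}"
      by (rule eventually_mono) (auto simp: std_normal_density_def split: split_indicator)
    then have "emeasure lborel {x<..y} = 0"
      proof (subst (asm) AE_iff_measurable[OF _ refl])
      show "{t \<in> space lborel. \<not> t \<notin> {x<..y}} \<in> sets lborel" by simp
      assume "emeasure lborel {t \<in> space lborel. \<not> t \<notin> {x<..y}} = 0"
      moreover have "{t \<in> space lborel. \<not> t \<notin> {x<..y}} = {x<..y}" by auto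
      ultimately show ?thesis by simp
    qed
    with assms show False by simp
  qed
  then have "measure NM {x<..y} \<noteq> 0"
    by (simp add: NMr.emeasure_eq_measure)
  then have "measure NM {x<..y} > 0"
    by (metis measure_nonneg less_le)
  with eq show ?thesis by simp
qed

lemma Phi_pos: "Phi x > 0"
proof -
  have "Phi (x-1) \<ge> 0" unfolding Phi_cdf by (rule NMr.cdf_nonneg)
  with Phi_strict[of "x-1" x] show ?thesis by simp
qed

lemma Phi_lt1: "Phi x < 1"
proof -
  have "Phi (x+1) \<le> 1" unfolding Phi_cdf by (rule NMr.cdf_bounded_prob)
  with Phi_strict[of x "x+1"] show ?thesis by simp
qed

definition G :: "real \<Rightarrow> real \<Rightarrow> real" where
  "G c t = Phi (-c - t) / (Phi (-c - t) + Phi (-c + t))"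

lemma G_strict: assumes "t1 < t2" shows "G c t2 < G c t1"
proof -
  define a1 where "a1 = Phi (-c - t1)"
  define a2 where "a2 = Phi (-c - t2)"
  define b1 where "b1 = Phi (-c + t1)"
  define b2 where "b2 = Phi (-c + t2)"
  have pos: "a1 > 0" "a2 > 0" "b1 > 0" "b2 > 0" unfolding a1_def a2_def b1_def b2_def by (auto intro: Phi_pos)
  have lt: "a2 < a1" "b1 < b2" unfolding a1_def a2_def b1_def b2_def using assms by (auto intro: Phi_strict)
  have "a2 * b1 < a1 * b2" using pos lt by (intro mult_strict_mono) auto
  then have "a2 / (a2 + b2) < a1 / (a1 + b1)" using pos by (simp add: divide_simps algebra_simps)
  then show ?thesis unfolding G_def a1_def a2_def b1_def b2_def .
qed

lemma G_cont: "isCont (G c) t"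
proof -
  have "Phi (-c - t) + Phi (-c + t) \<noteq> 0" using Phi_pos[of "-c-t"] Phi_pos[of "-c+t"] by simp
  then show ?thesis unfolding G_def
    by (intro continuous_intros isCont_o2[OF _ Phi_cont]) auto
qed

lemma G_top: "(G c \<longlongrightarrow> 0) at_top"
proof -
  have l1: "filterlim (\<lambda>t. -c - t) at_bot at_top" by real_asymp
  have l2: "filterlim (\<lambda>t. -c + t) at_top at_top" by real_asymp
  have "((\<lambda>t. Phi (-c - t)) \<longlongrightarrow> 0) at_top" using Phi_bot l1 by (rule filterlim_compose)
  moreover have "((\<lambda>t. Phi (-c + t)) \<longlongrightarrow> 1) at_top" using Phi_top l2 by (rule filterlim_compose)
  ultimately have "((\<lambda>t. Phi (-c - t) / (Phi (-c - t) + Phi (-c + t))) \<longlongrightarrow> 0 / (0 + 1)) at_top"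
    by (intro tendsto_intros) auto
  then show ?thesis unfolding G_def by simp
qed

lemma G_bot: "(G c \<longlongrightarrow> 1) at_bot"
proof -
  have l1: "filterlim (\<lambda>t. -c - t) at_top at_bot" by real_asymp
  have l2: "filterlim (\<lambda>t. -c + t) at_bot at_bot" by real_asymp
  have "((\<lambda>t. Phi (-c - t)) \<longlongrightarrow> 1) at_bot" using Phi_top l1 by (rule filterlim_compose)
  moreover have "((\<lambda>t. Phi (-c + t)) \<longlongrightarrow> 0) at_bot" using Phi_bot l2 by (rule filterlim_compose)
  ultimately have "((\<lambda>t. Phi (-c - t) / (Phi (-c - t) + Phi (-c + t))) \<longlongrightarrow> 1 / (1 + 0)) at_bot"
    by (intro tendsto_intros) auto
  then show ?thesis unfolding G_def by simp
qed

lemma G_ex: assumes "0 < p" "p < 1" shows "\<exists>t. G c t = p"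
proof -
  have "eventually (\<lambda>t. G c t > p) at_bot" using G_bot assms(2) by (rule order_tendstoD)
  then obtain a where a: "\<And>t. t \<le> a \<Longrightarrow> G c t > p" by (auto simp: eventually_at_bot_linorder)
  have "eventually (\<lambda>t. G c t < p) at_top" using G_top assms(1) by (rule order_tendstoD)
  then obtain b where b: "\<And>t. t \<ge> b \<Longrightarrow> G c t < p" by (auto simp: eventually_at_top_linorder)
  have "a \<le> b"
  proof (rule ccontr)
    assume "\<not> a \<le> b"
    then have "G c a < G c b" using G_strict[of b a c] by simp
    with a[of a] b[of b] show False by simp
  qed
  then show ?thesis using IVT2[of "G c" b p a] a[of a] b[of b] G_cont by force
qed


lemma F_formula: assumes "x > c" "c > 0"
  shows "F2sided x t c = (Phi (-c - t) + (Phi (x - t) - Phi (c - t))) / (Phi (-c - t) + Phi (-c + t))"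
proof -
  have "Phi (-c - t) \<le> Phi (x - t)" using Phi_strict[of "-c-t" "x-t"] assms by simp
  then show ?thesis using assms unfolding F2sided_def by (simp add: min_def)
qed

lemma F_ge: assumes "x > c" "c > 0" shows "F2sided x t c > G c t"
proof -
  have "Phi (c - t) < Phi (x - t)" using Phi_strict assms by simp
  moreover have "Phi (-c - t) + Phi (-c + t) > 0" using Phi_pos[of "-c-t"] Phi_pos[of "-c+t"] by simp
  ultimately have "Phi (-c - t) / (Phi (-c - t) + Phi (-c + t)) < (Phi (-c - t) + (Phi (x - t) - Phi (c - t))) / (Phi (-c - t) + Phi (-c + t))"
    by (intro divide_strict_right_mono) auto
  then show ?thesis unfolding F_formula[OF assms] G_def .
qed

lemma F_lim: assumes "c > 0"
  shows "((\<lambda>x. F2sided x t c) \<longlongrightarrow> G c t) (at_right c)"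
proof -
  define h where "h x = (Phi (-c - t) + (Phi (x - t) - Phi (c - t))) / (Phi (-c - t) + Phi (-c + t))" for x
  have D: "Phi (-c - t) + Phi (-c + t) \<noteq> 0" using Phi_pos[of "-c-t"] Phi_pos[of "-c+t"] by simp
  have "isCont h c" unfolding h_def using D
    by (intro continuous_intros isCont_o2[OF _ Phi_cont]) auto
  then have "(h \<longlongrightarrow> h c) (at_right c)"
    by (meson at_within_le_at isCont_def tendsto_mono)
  moreover have "h c = G c t" unfolding h_def G_def by simp
  moreover have "eventually (\<lambda>x. h x = F2sided x t c) (at_right c)"
    using eventually_at_right_less[of c] by eventually_elim (simp add: h_def F_formula assms)
  ultimately show ?thesis by (simp add: tendsto_cong[symmetric])
qed

theorem mainTheorem5:
  fixes c p :: real
  assumes c_pos: "c > 0"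
    and p_range: "0 < p" "p < 1"
    and bij_assm: "\<forall>xobs > c.
         continuous_on UNIV (\<lambda>\<theta>. F2sided xobs \<theta> c)
       \<and> (\<forall>\<theta>1 \<theta>2. \<theta>1 < \<theta>2 \<longrightarrow> F2sided xobs \<theta>2 c < F2sided xobs \<theta>1 c)
       \<and> range (\<lambda>\<theta>. F2sided xobs \<theta> c) = {0<..<1}"
  shows "(\<exists>!\<theta>. p = Phi (-c - \<theta>) / (Phi (-c - \<theta>) + Phi (-c + \<theta>)))
    \<and> ((\<lambda>xobs. theta2sided xobs c p) \<longlongrightarrow>
          (THE \<theta>. p = Phi (-c - \<theta>) / (Phi (-c - \<theta>) + Phi (-c + \<theta>)))) (at_right c)
    \<and> (p = 1/2 \<longrightarrow>
          (THE \<theta>. p = Phi (-c - \<theta>) / (Phi (-c - \<theta>) + Phi (-c + \<theta>))) = 0)"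
proof -
  have Geq: "(\<lambda>\<theta>. p = Phi (-c - \<theta>) / (Phi (-c - \<theta>) + Phi (-c + \<theta>))) = (\<lambda>\<theta>. G c \<theta> = p)"
    unfolding G_def by auto
  have inj: "t1 = t2" if "G c t1 = G c t2" for t1 t2
    using G_strict[of t1 t2 c] G_strict[of t2 t1 c] that by (cases t1 t2 rule: linorder_cases) auto
  obtain ts where ts: "G c ts = p" using G_ex p_range by blast
  have ex1: "\<exists>!\<theta>. G c \<theta> = p" using ts inj by blast
  have THEeq: "(THE \<theta>. G c \<theta> = p) = ts" using ts inj by blast
  have T: "F2sided x (theta2sided x c p) c = p" if "x > c" for x
  proof -
    from bij_assm that have mono: "\<And>t1 t2. t1 < t2 \<Longrightarrow> F2sided x t2 c < F2sided x t1 c"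
      and rng: "range (\<lambda>\<theta>. F2sided x \<theta> c) = {0<..<1}" by auto
    from rng p_range obtain t where t: "F2sided x t c = p" by (metis greaterThanLessThan_iff rangeE)
    have "\<exists>!t. F2sided x t c = p"
    proof (rule ex1I[of _ t])
      fix u assume "F2sided x u c = p"
      with t mono[of u t] mono[of t u] show "u = t" by (cases u t rule: linorder_cases) auto
    qed (rule t)
    then show ?thesis unfolding theta2sided_def by (rule theI')
  qed
  have mono: "\<And>x t1 t2. x > c \<Longrightarrow> t1 < t2 \<Longrightarrow> F2sided x t2 c < F2sided x t1 c"
    using bij_assm by blast
  have lim: "((\<lambda>x. theta2sided x c p) \<longlongrightarrow> ts) (at_right c)"
  proof (rule tendstoI)
    fix e :: real assume e: "e > 0"
    have "G c (ts + e) < p" using G_strict[of ts "ts+e" c] ts e by simp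
    then have ev1: "eventually (\<lambda>x. F2sided x (ts + e) c < p) (at_right c)"
      using order_tendstoD(2)[OF F_lim[OF c_pos, of "ts+e"]] by blast
    have Glo: "G c (ts - e) > p" using G_strict[of "ts-e" ts c] ts e by simp
    show "eventually (\<lambda>x. dist (theta2sided x c p) ts < e) (at_right c)"
      using ev1 eventually_at_right_less[of c]
    proof eventually_elim
      case (elim x)
      have up: "theta2sided x c p < ts + e"
      proof (rule ccontr)
        assume "\<not> ?thesis"
        then have "F2sided x (theta2sided x c p) c \<le> F2sided x (ts + e) c"
          using mono[OF elim(2), of "ts+e" "theta2sided x c p"] by (cases "theta2sided x c p = ts + e") auto
        with T[OF elim(2)] elim(1) show False by simp
      qed
      have lo: "theta2sided x c p > ts - e"
      proof (rule ccontr)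
        assume "\<not> ?thesis"
        then have "F2sided x (ts - e) c \<le> F2sided x (theta2sided x c p) c"
          using mono[OF elim(2), of "theta2sided x c p" "ts - e"] by (cases "theta2sided x c p = ts - e") auto
        moreover have "F2sided x (ts - e) c > G c (ts - e)" using F_ge elim(2) c_pos by blast
        ultimately show False using T[OF elim(2)] Glo by simp
      qed
      from up lo show ?case by (simp add: dist_real_def abs_less_iff)
    qed
  qed
  have half: "G c 0 = 1/2" unfolding G_def using Phi_pos[of "-c"] by simp
  show ?thesis unfolding Geq THEeq using ex1 lim half inj ts by auto
qed

end
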